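(* Let $s_1,\dots,s_{d-1}$ be positive integers, $s_0=s_d=1$, with $s_{i-1}s_i\le n_i$ for all $i$, and let $T=\sum_{\alpha_1,\dots,\alpha_{d-1}} e_1^{\alpha_1}\otimes e_2^{\iota_2(\alpha_1,\alpha_2)}\otimes\cdots\otimes e_{d-1}^{\iota_{d-1}(\alpha_{d-2},\alpha_{d-1})}\otimes e_d^{\alpha_{d-1}}$. The stabilizer $H=\{g\in G:g\cdot T=T\}$ consists exactly of the elements $$\begin{bmatrix}A_1&M_1\\0&B_1\end{bmatrix}\times\begin{bmatrix}A_1^{-\mathsf T}\otimes A_2&M_2\\0&B_2\end{bmatrix}\times\cdots\times\begin{bmatrix}A_{d-2}^{-\mathsf T}\otimes A_{d-1}&M_{d-1}\\0&B_{d-1}\end{bmatrix}\times\begin{bmatrix}A_{d-1}^{-\mathsf T}&M_d\\0&B_d\end{bmatrix},$$ where $A_i\in\mathrm{GL}(s_i)$ ($1\le i\le d-1$), $B_i\in\mathrm{GL}(n_i-s_{i-1}s_i)$, and $M_i$ are arbitrary $s_{i-1}s_i\times(n_i-s_{i-1}s_i)$ matrices.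
   Context: Fix integers $d\ge 3$ and $n_1,\dots,n_d\ge 2$. $V=\mathbb{R}^{n_1}\otimes\cdots\otimes\mathbb{R}^{n_d}$, and $G=\mathrm{GL}(n_1)\times\cdots\times\mathrm{GL}(n_d)$ acts on $V$ by $(g_1,\dots,g_d)\cdot(v_1\otimes\cdots\otimes v_d)=(g_1v_1)\otimes\cdots\otimes(g_dv_d)$, extended linearly. $e_i^1,\dots,e_i^{n_i}$ is the standard basis of $\mathbb{R}^{n_i}$. For $2\le i\le d-1$, $\iota_i:[s_{i-1}]\times[s_i]\to[s_{i-1}s_i]$ is the lexicographic bijection with the first argument most significant, and the Kronecker product uses the matching convention $(A\otimes B)_{\iota_i(a,b),\iota_i(a',b')}=A_{aa'}B_{bb'}$. *)

theory Defs
  imports "Jordan_Normal_Form.Matrix"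
begin

(* Coordinates are 0-based: e_i^1..e_i^{n_i} correspond to indices 0..n_i-1.
   Tensor factors are numbered 1..d. *)

definition multi_idx :: "nat \<Rightarrow> (nat \<Rightarrow> nat) \<Rightarrow> (nat \<Rightarrow> nat) set" where
  "multi_idx d n = {j. (\<forall>i\<in>{1..d}. j i < n i) \<and> (\<forall>i. i \<notin> {1..d} \<longrightarrow> j i = 0)}"

(* A tensor in V = R^{n_1} (x) ... (x) R^{n_d}: its coordinate function on multi_idx d n. *)
type_synonym tensor = "(nat \<Rightarrow> nat) \<Rightarrow> real"

definition in_G :: "nat \<Rightarrow> (nat \<Rightarrow> nat) \<Rightarrow> (nat \<Rightarrow> real mat) \<Rightarrow> bool" where
  "in_G d n g = (\<forall>i\<in>{1..d}. g i \<in> carrier_mat (n i) (n i) \<and> invertible_mat (g i))"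

definition act :: "nat \<Rightarrow> (nat \<Rightarrow> nat) \<Rightarrow> (nat \<Rightarrow> real mat) \<Rightarrow> tensor \<Rightarrow> tensor" where
  "act d n g X = (\<lambda>j. \<Sum>k\<in>multi_idx d n. (\<Prod>i\<in>{1..d}. g i $$ (j i, k i)) * X k)"

definition iota :: "(nat \<Rightarrow> nat) \<Rightarrow> nat \<Rightarrow> nat \<Rightarrow> nat \<Rightarrow> nat" where
  "iota s i a b = a * s i + b"

(* Kronecker product with the matching convention (A (x) B)_{iota(a,b),iota(a',b')} = A_{aa'} B_{bb'} *)
definition kron :: "'a::times mat \<Rightarrow> 'a mat \<Rightarrow> 'a mat" where
  "kron A B = mat (dim_row A * dim_row B) (dim_col A * dim_col B)
     (\<lambda>(i, j). A $$ (i div dim_row B, j div dim_col B) * B $$ (i mod dim_row B, j mod dim_col B))"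

definition minv :: "real mat \<Rightarrow> real mat" where
  "minv A = (SOME B. B \<in> carrier_mat (dim_row A) (dim_row A) \<and> inverts_mat A B \<and> inverts_mat B A)"

definition minvT :: "real mat \<Rightarrow> real mat" where
  "minvT A = transpose_mat (minv A)"

definition alphas :: "nat \<Rightarrow> (nat \<Rightarrow> nat) \<Rightarrow> (nat \<Rightarrow> nat) set" where
  "alphas d s = {a. (\<forall>i\<in>{1..d-1}. a i < s i) \<and> (\<forall>i. i \<notin> {1..d-1} \<longrightarrow> a i = 0)}"

(* index of the basis vector in the i-th factor of the summand for alpha *)
definition T_index :: "nat \<Rightarrow> (nat \<Rightarrow> nat) \<Rightarrow> (nat \<Rightarrow> nat) \<Rightarrow> nat \<Rightarrow> nat" where
  "T_index d s a i = (if i = 1 then a 1 else if i = d then a (d - 1) else iota s i (a (i - 1)) (a i))"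

definition T_tensor :: "nat \<Rightarrow> (nat \<Rightarrow> nat) \<Rightarrow> tensor" where
  "T_tensor d s = (\<lambda>j. \<Sum>a\<in>alphas d s. \<Prod>i\<in>{1..d}. (if j i = T_index d s a i then 1 else 0))"

definition diag_block :: "nat \<Rightarrow> (nat \<Rightarrow> real mat) \<Rightarrow> nat \<Rightarrow> real mat" where
  "diag_block d A i = (if i = 1 then A 1 else if i = d then minvT (A (d - 1))
                        else kron (minvT (A (i - 1))) (A i))"

definition stab_form :: "nat \<Rightarrow> (nat \<Rightarrow> nat) \<Rightarrow> (nat \<Rightarrow> nat) \<Rightarrow> (nat \<Rightarrow> real mat) \<Rightarrow> bool" where
  "stab_form d n s g = (\<exists>A B M.
     (\<forall>i\<in>{1..d-1}. A i \<in> carrier_mat (s i) (s i) \<and> invertible_mat (A i)) \<and>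
     (\<forall>i\<in>{1..d}. B i \<in> carrier_mat (n i - s (i-1) * s i) (n i - s (i-1) * s i) \<and> invertible_mat (B i)) \<and>
     (\<forall>i\<in>{1..d}. M i \<in> carrier_mat (s (i-1) * s i) (n i - s (i-1) * s i)) \<and>
     (\<forall>i\<in>{1..d}. g i = four_block_mat (diag_block d A i) (M i)
                            (0\<^sub>m (n i - s (i-1) * s i) (s (i-1) * s i)) (B i)))"

end

theory Submission
  imports Defs "Jordan_Normal_Form.Determinant"
begin

definition box :: "nat \<Rightarrow> (nat \<Rightarrow> nat) \<Rightarrow> (nat \<Rightarrow> nat) set" where
  "box m c = {f. (\<forall>i\<in>{1..m}. f i < c i) \<and> (\<forall>i. i \<notin> {1..m} \<longrightarrow> f i = 0)}"

lemma box_0: "box 0 c = {\<lambda>_. 0}"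
  unfolding box_def by auto

lemma box_Suc: "box (Suc m) c = (\<lambda>(f,x). f(Suc m := x)) ` (box m c \<times> {..<c (Suc m)})"
proof (rule equalityI; rule subsetI)
  fix f assume f: "f \<in> box (Suc m) c"
  have "f = (f(Suc m := 0))(Suc m := f (Suc m))" by simp
  moreover have "f(Suc m := 0) \<in> box m c" using f unfolding box_def by auto
  moreover have "f (Suc m) < c (Suc m)" using f unfolding box_def by auto
  ultimately show "f \<in> (\<lambda>(f,x). f(Suc m := x)) ` (box m c \<times> {..<c (Suc m)})"
    by (intro rev_image_eqI[of "(f(Suc m := 0), f (Suc m))"]) auto
next
  fix f assume "f \<in> (\<lambda>(f,x). f(Suc m := x)) ` (box m c \<times> {..<c (Suc m)})"
  then show "f \<in> box (Suc m) c" unfolding box_def by auto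
qed

lemma inj_box_Suc: "inj_on (\<lambda>(f,x). f(Suc m := x)) (box m c \<times> {..<c (Suc m)})"
proof (rule inj_onI, clarsimp)
  fix f x g y
  assume "f \<in> box m c" "g \<in> box m c" and e: "f(Suc m := x) = g(Suc m := y)"
  then have "f (Suc m) = 0" "g (Suc m) = 0" unfolding box_def by auto
  moreover have "\<forall>i. i \<noteq> Suc m \<longrightarrow> f i = g i" using e by (metis fun_upd_other)
  moreover have "x = y" using e by (metis fun_upd_same)
  ultimately show "f = g \<and> x = y" by (metis ext)
qed

lemma finite_box: "finite (box m c)"
proof (induction m)
  case 0 then show ?case by (simp add: box_0)
next
  case (Suc m) then show ?case by (simp add: box_Suc)
qed

lemma sum_box_Suc:
  "(\<Sum>f\<in>box (Suc m) c. F f) = (\<Sum>f\<in>box m c. \<Sum>x<c (Suc m). F (f(Suc m := x)))"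
proof -
  have "sum F (box (Suc m) c) = sum (F \<circ> (\<lambda>(f,x). f(Suc m := x))) (box m c \<times> {..<c (Suc m)})"
    by (simp only: box_Suc sum.reindex[OF inj_box_Suc])
  also have "\<dots> = (\<Sum>(f,x)\<in>box m c \<times> {..<c (Suc m)}. F (f(Suc m := x)))"
    by (intro sum.cong refl) auto
  also have "\<dots> = (\<Sum>f\<in>box m c. \<Sum>x<c (Suc m). F (f(Suc m := x)))"
    by (rule sum.cartesian_product[symmetric])
  finally show ?thesis .
qed

lemma sum_prod_box:
  "(\<Sum>k\<in>box m c. \<Prod>i\<in>{1..m}. F i (k i)) = (\<Prod>i\<in>{1..m}. \<Sum>x<c i. (F i x :: real))"
proof (induction m)
  case 0 then show ?case by (simp add: box_0)
next
  case (Suc m)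
  have "(\<Sum>k\<in>box (Suc m) c. \<Prod>i\<in>{1..Suc m}. F i (k i))
      = (\<Sum>f\<in>box m c. \<Sum>x<c (Suc m). (\<Prod>i\<in>{1..m}. F i (f i)) * F (Suc m) x)"
  proof (subst sum_box_Suc, intro sum.cong refl)
    fix f x
    have "(\<Prod>i\<in>{1..Suc m}. F i ((f(Suc m := x)) i)) = (\<Prod>i\<in>{1..m}. F i ((f(Suc m := x)) i)) * F (Suc m) x"
      by (simp add: prod.cl_ivl_Suc)
    also have "(\<Prod>i\<in>{1..m}. F i ((f(Suc m := x)) i)) = (\<Prod>i\<in>{1..m}. F i (f i))"
      by (intro prod.cong) auto
    finally show "(\<Prod>i\<in>{1..Suc m}. F i ((f(Suc m := x)) i)) = (\<Prod>i\<in>{1..m}. F i (f i)) * F (Suc m) x" .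
  qed
  also have "\<dots> = (\<Sum>f\<in>box m c. (\<Prod>i\<in>{1..m}. F i (f i))) * (\<Sum>x<c (Suc m). F (Suc m) x)"
    by (rule sum_product[symmetric])
  also have "\<dots> = (\<Prod>i\<in>{1..Suc m}. \<Sum>x<c i. F i x)"
    using Suc by (simp add: prod.cl_ivl_Suc)
  finally show ?case .
qed

lemma idx_bound: "(a::nat) < x \<Longrightarrow> b < y \<Longrightarrow> a * y + b < x * y"
proof -
  assume "a < x" "b < y"
  then have "a * y + b < a * y + y" by simp
  also have "\<dots> = (a + 1) * y" by simp
  also have "\<dots> \<le> x * y" using \<open>a < x\<close> by (intro mult_right_mono) auto
  finally show ?thesis .
qed

lemma idx_eq: "(b::nat) < s \<Longrightarrow> b' < s \<Longrightarrow> (a * s + b = a' * s + b') = (a = a' \<and> b = b')"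
proof
  assume b: "b < s" "b' < s" and e: "a * s + b = a' * s + b'"
  have "(a * s + b) div s = a" using b by simp
  moreover have "(a' * s + b') div s = a'" using b by simp
  ultimately have "a = a'" using e by simp
  then show "a = a' \<and> b = b'" using e by simp
qed simp

lemma sum_shift_add: "(\<Sum>q<(m::nat)+k. F q) = (\<Sum>q<m. F q) + (\<Sum>b<k. (F (m + b) :: real))"
  by (induction k) simp_all

lemma sum_split_idx: "(\<Sum>q<(x::nat) * y. F q) = (\<Sum>a<x. \<Sum>b<y. (F (a * y + b) :: real))"
proof (induction x)
  case 0 then show ?case by simp
next
  case (Suc x)
  have "(\<Sum>q<Suc x * y. F q) = (\<Sum>q<x * y + y. F q)" by (simp add: add.commute)
  also have "\<dots> = (\<Sum>q<x * y. F q) + (\<Sum>b<y. F (x * y + b))" by (rule sum_shift_add)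
  also have "\<dots> = (\<Sum>a<Suc x. \<Sum>b<y. F (a * y + b))" by (simp only: Suc.IH sum.lessThan_Suc)
  finally show ?case .
qed

lemma delta_sum:
  assumes s: "(0::nat) < s"
  shows "(\<Sum>b'<s. (if p = a' * s + b' then 1 else 0) * (f b' :: real)) = (if p div s = a' then f (p mod s) else 0)"
proof (cases "p div s = a'")
  case True
  then have p: "p = a' * s + p mod s" by (metis div_mult_mod_eq)
  have ms: "p mod s < s" using s by simp
  have "(\<Sum>b'<s. (if p = a' * s + b' then 1 else 0) * f b') = (\<Sum>b'<s. (if b' = p mod s then f b' else 0))"
  proof (intro sum.cong refl)
    fix b' assume "b' \<in> {..<s}"
    then have "b' < s" by simp
    then have "(a' * s + b' = a' * s + p mod s) = (b' = p mod s)" using idx_eq[OF _ ms, of b' a' a'] by simp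
    then have "(p = a' * s + b') = (b' = p mod s)" using p by metis
    then show "(if p = a' * s + b' then 1 else 0) * f b' = (if b' = p mod s then f b' else 0)" by simp
  qed
  also have "\<dots> = f (p mod s)" using ms by simp
  finally show ?thesis using True by simp
next
  case False
  have "\<And>b'. b' < s \<Longrightarrow> p \<noteq> a' * s + b'"
  proof
    fix b' assume "b' < s" "p = a' * s + b'"
    then have "p div s = a'" by simp
    then show False using False by simp
  qed
  then have "(\<Sum>b'<s. (if p = a' * s + b' then 1 else 0) * f b') = 0"
    by (intro sum.neutral) auto
  then show ?thesis using False by simp
qed


fun LL :: "(nat \<Rightarrow> nat) \<Rightarrow> (nat \<Rightarrow> nat \<Rightarrow> nat \<Rightarrow> real) \<Rightarrow> (nat \<Rightarrow> nat) \<Rightarrow> nat \<Rightarrow> nat \<Rightarrow> real" where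
  "LL s G j 0 b = (if b = 0 then 1 else 0)"
| "LL s G j (Suc i) b = (\<Sum>a<s i. LL s G j i a * G (Suc i) (j (Suc i)) (a * s (Suc i) + b))"

fun RR :: "nat \<Rightarrow> (nat \<Rightarrow> nat) \<Rightarrow> (nat \<Rightarrow> nat \<Rightarrow> nat \<Rightarrow> real) \<Rightarrow> (nat \<Rightarrow> nat) \<Rightarrow> nat \<Rightarrow> nat \<Rightarrow> real" where
  "RR d s G j 0 a = (if a = 0 then 1 else 0)"
| "RR d s G j (Suc k) a = (\<Sum>b<s (d-k). G (d-k) (j (d-k)) (a * s (d-k) + b) * RR d s G j k b)"

definition ent :: "(nat \<Rightarrow> real mat) \<Rightarrow> nat \<Rightarrow> nat \<Rightarrow> nat \<Rightarrow> real" where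
  "ent g l p q = g l $$ (p,q)"

definition dlt :: "nat \<Rightarrow> nat \<Rightarrow> nat \<Rightarrow> real" where
  "dlt l p q = (if p = q then 1 else 0)"

lemma sum_delta_left: "c < (S::nat) \<Longrightarrow> (\<Sum>a<S. (if a = c then 1 else 0) * (F a :: real)) = F c"
proof -
  assume c: "c < S"
  have "(\<Sum>a<S. (if a = c then 1 else 0) * (F a :: real)) = (\<Sum>a<S. if a = c then F c else 0)"
    by (intro sum.cong refl) auto
  also have "\<dots> = F c" using c by simp
  finally show ?thesis .
qed

lemma LL_box:
  assumes s0: "0 < s 0"
  shows "(\<Sum>\<alpha>\<in>box m s. (\<Prod>l\<in>{1..m}. G l (j l) (\<alpha> (l-1) * s l + \<alpha> l)) * F (\<alpha> m))
   = (\<Sum>b<s m. LL s G j m b * F b)"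
proof (induction m arbitrary: F)
  case 0
  have "(\<Sum>b<s 0. LL s G j 0 b * F b) = (\<Sum>b<s 0. (if b = 0 then 1 else 0) * F b)" by simp
  also have "\<dots> = F 0" by (rule sum_delta_left[OF s0])
  finally show ?case by (simp add: box_0)
next
  case (Suc m)
  let ?P = "\<lambda>\<alpha>. (\<Prod>l\<in>{1..m}. G l (j l) (\<alpha> (l-1) * s l + \<alpha> l))"
  let ?F = "\<lambda>a. (\<Sum>x<s (Suc m). G (Suc m) (j (Suc m)) (a * s (Suc m) + x) * F x)"
  have "(\<Sum>\<alpha>\<in>box (Suc m) s. (\<Prod>l\<in>{1..Suc m}. G l (j l) (\<alpha> (l-1) * s l + \<alpha> l)) * F (\<alpha> (Suc m)))
     = (\<Sum>\<alpha>\<in>box m s. \<Sum>x<s (Suc m). ?P \<alpha> * (G (Suc m) (j (Suc m)) (\<alpha> m * s (Suc m) + x) * F x))"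
  proof (subst sum_box_Suc, intro sum.cong refl)
    fix \<alpha> x
    define H where "H = (\<lambda>l. G l (j l) ((\<alpha>(Suc m := x)) (l-1) * s l + (\<alpha>(Suc m := x)) l))"
    have e1: "(\<Prod>l\<in>{1..Suc m}. H l) = (\<Prod>l\<in>{1..m}. H l) * H (Suc m)"
      by (simp add: prod.cl_ivl_Suc)
    have e2: "(\<Prod>l\<in>{1..m}. H l) = ?P \<alpha>"
      unfolding H_def by (intro prod.cong refl) auto
    have e3: "H (Suc m) = G (Suc m) (j (Suc m)) (\<alpha> m * s (Suc m) + x)"
      unfolding H_def by simp
    show "(\<Prod>l\<in>{1..Suc m}. G l (j l) ((\<alpha>(Suc m := x)) (l-1) * s l + (\<alpha>(Suc m := x)) l)) *
         F ((\<alpha>(Suc m := x)) (Suc m)) = ?P \<alpha> * (G (Suc m) (j (Suc m)) (\<alpha> m * s (Suc m) + x) * F x)"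
      using e1 e2 e3 unfolding H_def[symmetric] by simp
  qed
  also have "\<dots> = (\<Sum>\<alpha>\<in>box m s. ?P \<alpha> * ?F (\<alpha> m))"
    by (simp add: sum_distrib_left)
  also have "\<dots> = (\<Sum>a<s m. LL s G j m a * ?F a)" by (rule Suc.IH)
  also have "\<dots> = (\<Sum>a<s m. \<Sum>x<s (Suc m). LL s G j m a * G (Suc m) (j (Suc m)) (a * s (Suc m) + x) * F x)"
    by (simp add: sum_distrib_left mult.assoc)
  also have "\<dots> = (\<Sum>x<s (Suc m). \<Sum>a<s m. LL s G j m a * G (Suc m) (j (Suc m)) (a * s (Suc m) + x) * F x)"
    by (rule sum.swap)
  also have "\<dots> = (\<Sum>x<s (Suc m). LL s G j (Suc m) x * F x)"
    by (simp add: sum_distrib_right)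
  finally show ?case .
qed

lemma LL_cong:
  "(\<forall>l\<in>{1..i}. \<forall>q<s (l-1) * s l. G l (j l) q = G' l (j' l) q) \<Longrightarrow> b < s i \<Longrightarrow>
   LL s G j i b = LL s G' j' i b"
proof (induction i arbitrary: b)
  case 0 then show ?case by simp
next
  case (Suc i)
  have "\<And>a. a < s i \<Longrightarrow> LL s G j i a * G (Suc i) (j (Suc i)) (a * s (Suc i) + b)
       = LL s G' j' i a * G' (Suc i) (j' (Suc i)) (a * s (Suc i) + b)"
  proof -
    fix a assume a: "a < s i"
    have "LL s G j i a = LL s G' j' i a" using Suc.IH Suc.prems a by auto
    moreover have "a * s (Suc i) + b < s (Suc i - 1) * s (Suc i)"
      using idx_bound[OF a Suc.prems(2)] by simp
    then have "G (Suc i) (j (Suc i)) (a * s (Suc i) + b) = G' (Suc i) (j' (Suc i)) (a * s (Suc i) + b)"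
      using Suc.prems(1) by auto
    ultimately show "?thesis a" by simp
  qed
  then show ?case by simp
qed

lemma RR_cong:
  "(\<forall>l. d - k < l \<and> l \<le> d \<longrightarrow> (\<forall>q<s (l-1) * s l. G l (j l) q = G' l (j' l) q)) \<Longrightarrow> k \<le> d \<Longrightarrow>
   a < s (d - k) \<Longrightarrow> RR d s G j k a = RR d s G' j' k a"
proof (induction k arbitrary: a)
  case 0 then show ?case by simp
next
  case (Suc k)
  have "\<And>b. b < s (d - k) \<Longrightarrow> G (d-k) (j (d-k)) (a * s (d-k) + b) * RR d s G j k b
       = G' (d-k) (j' (d-k)) (a * s (d-k) + b) * RR d s G' j' k b"
  proof -
    fix b assume b: "b < s (d - k)"
    have h1: "\<forall>l. d - k < l \<and> l \<le> d \<longrightarrow> (\<forall>q<s (l-1) * s l. G l (j l) q = G' l (j' l) q)"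
    proof (rule allI, rule impI)
      fix l assume l: "d - k < l \<and> l \<le> d"
      then have "d - Suc k < l \<and> l \<le> d" by arith
      then show "\<forall>q<s (l-1) * s l. G l (j l) q = G' l (j' l) q" using Suc.prems(1) by blast
    qed
    have "k \<le> d" using Suc.prems(2) by arith
    then have e1: "RR d s G j k b = RR d s G' j' k b" using Suc.IH[OF h1 _ b] by blast
    have bd: "a * s (d-k) + b < s (d - k - 1) * s (d - k)"
    proof -
      have "d - Suc k = d - k - 1" by arith
      then have "a < s (d - k - 1)" using Suc.prems(3) by simp
      then show ?thesis using idx_bound[OF _ b] by blast
    qed
    have "d - Suc k < d - k \<and> d - k \<le> d" using Suc.prems(2) by arith
    then have "\<forall>q<s (d - k - 1) * s (d - k). G (d-k) (j (d-k)) q = G' (d-k) (j' (d-k)) q"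
      using Suc.prems(1) by blast
    then have "G (d-k) (j (d-k)) (a * s (d-k) + b) = G' (d-k) (j' (d-k)) (a * s (d-k) + b)"
      using bd by blast
    with e1 show "?thesis b" by simp
  qed
  then show ?case by simp
qed

lemma LL_RR_split:
  assumes sd: "s d = 1"
  shows "i \<le> d \<Longrightarrow> (\<Sum>b<s i. LL s G j i b * RR d s G j (d - i) b) = LL s G j d 0"
proof (induction "d - i" arbitrary: i)
  case 0
  then have "i = d" by simp
  then show ?case using sd by simp
next
  case (Suc k)
  then have i: "i < d" and k: "d - Suc i = k" "d - k = Suc i" by auto
  have "(\<Sum>b<s i. LL s G j i b * RR d s G j (d - i) b)
      = (\<Sum>b<s i. LL s G j i b * (\<Sum>c<s (Suc i). G (Suc i) (j (Suc i)) (b * s (Suc i) + c) * RR d s G j k c))"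
    using Suc.hyps(2)[symmetric] k by simp
  also have "\<dots> = (\<Sum>b<s i. \<Sum>c<s (Suc i). LL s G j i b * G (Suc i) (j (Suc i)) (b * s (Suc i) + c) * RR d s G j k c)"
    by (simp add: sum_distrib_left mult.assoc)
  also have "\<dots> = (\<Sum>c<s (Suc i). \<Sum>b<s i. LL s G j i b * G (Suc i) (j (Suc i)) (b * s (Suc i) + c) * RR d s G j k c)"
    by (rule sum.swap)
  also have "\<dots> = (\<Sum>c<s (Suc i). LL s G j (Suc i) c * RR d s G j k c)"
    by (simp add: sum_distrib_right)
  also have "\<dots> = LL s G j d 0" using Suc.hyps(1)[of "Suc i"] k i by simp
  finally show ?case .
qed

lemma LL_dlt_eval:
  "(\<forall>l\<in>{1..i}. j l = \<alpha> (l-1) * s l + \<alpha> l) \<Longrightarrow> (\<forall>l\<le>i. \<alpha> l < s l) \<Longrightarrow> \<alpha> 0 = 0 \<Longrightarrow>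
   b < s i \<Longrightarrow> LL s dlt j i b = (if b = \<alpha> i then 1 else 0)"
proof (induction i arbitrary: b)
  case 0 then show ?case by simp
next
  case (Suc i)
  have ai: "\<alpha> i < s i" using Suc.prems(2) by simp
  have a1: "\<alpha> (Suc i) < s (Suc i)" using Suc.prems(2) by simp
  have IH': "\<And>a. a < s i \<Longrightarrow> LL s dlt j i a = (if a = \<alpha> i then 1 else 0)"
    using Suc.IH Suc.prems by auto
  have "LL s dlt j (Suc i) b = (\<Sum>a<s i. (if a = \<alpha> i then 1 else 0) * dlt (Suc i) (j (Suc i)) (a * s (Suc i) + b))"
    unfolding LL.simps by (intro sum.cong refl) (simp add: IH')
  also have "\<dots> = dlt (Suc i) (j (Suc i)) (\<alpha> i * s (Suc i) + b)" by (rule sum_delta_left[OF ai])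
  also have "\<dots> = (if b = \<alpha> (Suc i) then 1 else 0)"
    using Suc.prems(1) idx_eq[OF a1 Suc.prems(4), of "\<alpha> i" "\<alpha> i"] unfolding dlt_def by auto
  finally show ?case .
qed

lemma LL_dlt_last:
  "(\<forall>l\<in>{1..i}. j l = \<alpha> (l-1) * s l + \<alpha> l) \<Longrightarrow> (\<forall>l\<le>i. \<alpha> l < s l) \<Longrightarrow> \<alpha> 0 = 0 \<Longrightarrow>
   LL s dlt j (Suc i) b = (if j (Suc i) = \<alpha> i * s (Suc i) + b then 1 else 0)"
proof -
  assume h: "\<forall>l\<in>{1..i}. j l = \<alpha> (l-1) * s l + \<alpha> l" "\<forall>l\<le>i. \<alpha> l < s l" "\<alpha> 0 = 0"
  have ai: "\<alpha> i < s i" using h by simp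
  have "LL s dlt j (Suc i) b = (\<Sum>a<s i. (if a = \<alpha> i then 1 else 0) * dlt (Suc i) (j (Suc i)) (a * s (Suc i) + b))"
    unfolding LL.simps by (intro sum.cong refl) (simp add: LL_dlt_eval[OF h])
  also have "\<dots> = dlt (Suc i) (j (Suc i)) (\<alpha> i * s (Suc i) + b)" by (rule sum_delta_left[OF ai])
  finally show ?thesis unfolding dlt_def .
qed

lemma RR_dlt_eval:
  assumes sd: "s d = 1"
  shows "k \<le> d \<Longrightarrow> (\<forall>l. d - k < l \<and> l \<le> d \<longrightarrow> j l = \<alpha> (l-1) * s l + \<alpha> l) \<Longrightarrow>
   (\<forall>l. d - k \<le> l \<and> l \<le> d \<longrightarrow> \<alpha> l < s l) \<Longrightarrow> a < s (d - k) \<Longrightarrow>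
   RR d s dlt j k a = (if a = \<alpha> (d - k) then 1 else 0)"
proof (induction k arbitrary: a)
  case 0
  then have "\<alpha> d = 0" using sd by auto
  then show ?case by simp
next
  case (Suc k)
  define l0 where "l0 = d - k"
  have l0: "d - Suc k = l0 - 1" "0 < l0" "l0 \<le> d" using Suc.prems(1) unfolding l0_def by auto
  have al0: "\<alpha> l0 < s l0" using Suc.prems(3) l0 by auto
  have jl0: "j l0 = \<alpha> (l0 - 1) * s l0 + \<alpha> l0" using Suc.prems(2) l0 by auto
  have h1: "\<forall>l. d - k < l \<and> l \<le> d \<longrightarrow> j l = \<alpha> (l-1) * s l + \<alpha> l" using Suc.prems(2) by auto
  have h2: "\<forall>l. d - k \<le> l \<and> l \<le> d \<longrightarrow> \<alpha> l < s l" using Suc.prems(3) by auto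
  have IH': "\<And>b. b < s l0 \<Longrightarrow> RR d s dlt j k b = (if b = \<alpha> l0 then 1 else 0)"
    using Suc.IH[OF _ h1 h2] Suc.prems(1) unfolding l0_def by simp
  have "RR d s dlt j (Suc k) a = (\<Sum>b<s l0. (if b = \<alpha> l0 then 1 else 0) * dlt l0 (j l0) (a * s l0 + b))"
    unfolding RR.simps l0_def[symmetric] by (intro sum.cong refl) (simp add: IH')
  also have "\<dots> = dlt l0 (j l0) (a * s l0 + \<alpha> l0)" by (rule sum_delta_left[OF al0])
  also have "\<dots> = (if a = \<alpha> (d - Suc k) then 1 else 0)"
  proof -
    have "(\<alpha> (l0 - 1) * s l0 + \<alpha> l0 = a * s l0 + \<alpha> l0) = (a = \<alpha> (l0 - 1))"
      using idx_eq[OF al0 al0, of "\<alpha> (l0 - 1)" a] by auto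
    then show ?thesis using jl0 l0(1) unfolding dlt_def by simp
  qed
  finally show ?case .
qed


lemma prod_last: "0 < (d::nat) \<Longrightarrow> prod f {1..d} = prod f {1..d-1} * (f d :: real)"
  by (cases d) (auto simp: prod.cl_ivl_Suc)

lemma multi_idx_box: "multi_idx d n = box d n"
  unfolding multi_idx_def box_def ..

lemma alphas_box: "alphas d s = box (d-1) s"
  unfolding alphas_def box_def ..

lemma mult_entry:
  assumes "A \<in> carrier_mat m m" "B \<in> carrier_mat m m" "p < m" "q < m"
  shows "(A * B) $$ (p,q) = (\<Sum>x<m. A $$ (p,x) * B $$ (x,q))"
  using assms by (auto simp: scalar_prod_def lessThan_atLeast0 intro!: sum.cong)

lemma act_cong: "(\<forall>l\<in>{1..d}. g l = g' l) \<Longrightarrow> act d n g X = act d n g' X"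
  unfolding act_def by (intro ext sum.cong refl arg_cong2[where f = "(*)"] prod.cong) auto

lemma act_cong2: "(\<forall>k\<in>multi_idx d n. X k = Y k) \<Longrightarrow> act d n g X j = act d n g Y j"
  unfolding act_def by (intro sum.cong refl) auto

lemma act_comp:
  assumes gh: "\<forall>l\<in>{1..d}. g l \<in> carrier_mat (n l) (n l) \<and> h l \<in> carrier_mat (n l) (n l)"
    and k: "k \<in> multi_idx d n"
  shows "act d n h (act d n g X) k = act d n (\<lambda>l. h l * g l) X k"
proof -
  have "act d n h (act d n g X) k
      = (\<Sum>j\<in>box d n. \<Sum>m\<in>box d n. ((\<Prod>i\<in>{1..d}. h i $$ (k i, j i)) * (\<Prod>i\<in>{1..d}. g i $$ (j i, m i))) * X m)"
    unfolding act_def multi_idx_box by (simp add: sum_distrib_left mult.assoc)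
  also have "\<dots> = (\<Sum>m\<in>box d n. \<Sum>j\<in>box d n. ((\<Prod>i\<in>{1..d}. h i $$ (k i, j i) * g i $$ (j i, m i))) * X m)"
    by (subst sum.swap) (simp add: prod.distrib)
  also have "\<dots> = (\<Sum>m\<in>box d n. (\<Sum>j\<in>box d n. (\<Prod>i\<in>{1..d}. h i $$ (k i, j i) * g i $$ (j i, m i))) * X m)"
    by (simp add: sum_distrib_right)
  also have "\<dots> = (\<Sum>m\<in>box d n. (\<Prod>i\<in>{1..d}. \<Sum>x<n i. h i $$ (k i, x) * g i $$ (x, m i)) * X m)"
    by (subst sum_prod_box) simp
  also have "\<dots> = (\<Sum>m\<in>box d n. (\<Prod>i\<in>{1..d}. (h i * g i) $$ (k i, m i)) * X m)"
  proof (intro sum.cong refl arg_cong2[where f = "(*)"] prod.cong)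
    fix m i assume m: "m \<in> box d n" and i: "i \<in> {1..d}"
    have "k i < n i" "m i < n i" using m k i unfolding box_def multi_idx_def by auto
    moreover have "h i \<in> carrier_mat (n i) (n i)" "g i \<in> carrier_mat (n i) (n i)" using gh i by auto
    ultimately show "(\<Sum>x<n i. h i $$ (k i, x) * g i $$ (x, m i)) = (h i * g i) $$ (k i, m i)"
      using mult_entry by metis
  qed
  also have "\<dots> = act d n (\<lambda>l. h l * g l) X k"
    unfolding act_def multi_idx_box by simp
  finally show ?thesis .
qed

locale mps =
  fixes d :: nat and n s :: "nat \<Rightarrow> nat"
  assumes d3: "d \<ge> 3"
    and s_pos: "\<forall>i\<in>{1..d-1}. s i \<ge> 1"
    and s0: "s 0 = 1" and sd: "s d = 1"
    and sn: "\<forall>i\<in>{1..d}. s (i-1) * s i \<le> n i"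
begin

lemma spos: "i \<le> d \<Longrightarrow> 0 < s i"
proof -
  assume i: "i \<le> d"
  show ?thesis
  proof (cases "i = 0 \<or> i = d")
    case True then show ?thesis using s0 sd by auto
  next
    case False then have "i \<in> {1..d-1}" using i by auto
    then show ?thesis using s_pos by force
  qed
qed

lemma alpha_out: "\<alpha> \<in> alphas d s \<Longrightarrow> \<alpha> 0 = 0 \<and> \<alpha> d = 0"
  unfolding alphas_def using d3 by auto

lemma alpha_lt: "\<alpha> \<in> alphas d s \<Longrightarrow> i \<le> d \<Longrightarrow> \<alpha> i < s i"
proof -
  assume a: "\<alpha> \<in> alphas d s" and i: "i \<le> d"
  show ?thesis
  proof (cases "i = 0 \<or> i = d")
    case True then show ?thesis using alpha_out[OF a] s0 sd by auto
  next
    case False then show ?thesis using a i unfolding alphas_def by auto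
  qed
qed

lemma Tidx: "\<alpha> \<in> alphas d s \<Longrightarrow> i \<in> {1..d} \<Longrightarrow> T_index d s \<alpha> i = \<alpha> (i-1) * s i + \<alpha> i"
  using alpha_out[of \<alpha>] sd d3 unfolding T_index_def iota_def by auto

lemma idx_lt_n: "a < s (i-1) \<Longrightarrow> b < s i \<Longrightarrow> i \<in> {1..d} \<Longrightarrow> a * s i + b < n i"
  using idx_bound[of a "s (i-1)" b "s i"] sn by (meson order_less_le_trans)

lemma Tidx_lt: "\<alpha> \<in> alphas d s \<Longrightarrow> i \<in> {1..d} \<Longrightarrow> T_index d s \<alpha> i < n i"
  using Tidx idx_lt_n alpha_lt by auto

lemma chain:
  "(\<Sum>\<alpha>\<in>alphas d s. \<Prod>i\<in>{1..d}. G i (j i) (T_index d s \<alpha> i)) = LL s G j d 0"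
proof -
  have dd: "Suc (d - 1) = d" using d3 by simp
  have "(\<Sum>\<alpha>\<in>alphas d s. \<Prod>i\<in>{1..d}. G i (j i) (T_index d s \<alpha> i))
     = (\<Sum>\<alpha>\<in>box (d-1) s. (\<Prod>l\<in>{1..d-1}. G l (j l) (\<alpha> (l-1) * s l + \<alpha> l)) * G d (j d) (\<alpha> (d-1)))"
  proof (unfold alphas_box[symmetric], intro sum.cong refl)
    fix \<alpha> assume a: "\<alpha> \<in> alphas d s"
    have "(\<Prod>i\<in>{1..d}. G i (j i) (T_index d s \<alpha> i)) = (\<Prod>i\<in>{1..d-1}. G i (j i) (T_index d s \<alpha> i)) * G d (j d) (T_index d s \<alpha> d)"
      using d3 by (intro prod_last) simp
    also have "(\<Prod>i\<in>{1..d-1}. G i (j i) (T_index d s \<alpha> i)) = (\<Prod>l\<in>{1..d-1}. G l (j l) (\<alpha> (l-1) * s l + \<alpha> l))"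
      using Tidx[OF a] by (intro prod.cong refl) auto
    also have "T_index d s \<alpha> d = \<alpha> (d-1)" using Tidx[OF a, of d] alpha_out[OF a] sd d3 by auto
    finally show "(\<Prod>i\<in>{1..d}. G i (j i) (T_index d s \<alpha> i)) = (\<Prod>l\<in>{1..d-1}. G l (j l) (\<alpha> (l-1) * s l + \<alpha> l)) * G d (j d) (\<alpha> (d-1))" .
  qed
  also have "\<dots> = (\<Sum>b<s (d-1). LL s G j (d-1) b * G d (j d) b)"
    using LL_box[where m="d-1" and s=s and G=G and j=j and F="\<lambda>a. G d (j d) a"] s0 by simp
  also have "\<dots> = LL s G j d 0"
    using LL.simps(2)[where i="d-1" and b=0, unfolded dd] sd by simp
  finally show ?thesis .
qed

lemma T_LL: "T_tensor d s j = LL s dlt j d 0"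
  unfolding T_tensor_def chain[symmetric] dlt_def by (intro sum.cong prod.cong refl)

lemma act_LL: "act d n g (T_tensor d s) j = LL s (ent g) j d 0"
proof -
  have "act d n g (T_tensor d s) j
     = (\<Sum>k\<in>box d n. \<Sum>\<alpha>\<in>alphas d s. \<Prod>i\<in>{1..d}. g i $$ (j i, k i) * (if k i = T_index d s \<alpha> i then 1 else 0))"
    unfolding act_def T_tensor_def multi_idx_box by (simp add: sum_distrib_left prod.distrib)
  also have "\<dots> = (\<Sum>\<alpha>\<in>alphas d s. \<Sum>k\<in>box d n. \<Prod>i\<in>{1..d}. g i $$ (j i, k i) * (if k i = T_index d s \<alpha> i then 1 else 0))"
    by (rule sum.swap)
  also have "\<dots> = (\<Sum>\<alpha>\<in>alphas d s. \<Prod>i\<in>{1..d}. \<Sum>x<n i. g i $$ (j i, x) * (if x = T_index d s \<alpha> i then 1 else 0))"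
    by (subst sum_prod_box) simp
  also have "\<dots> = (\<Sum>\<alpha>\<in>alphas d s. \<Prod>i\<in>{1..d}. ent g i (j i) (T_index d s \<alpha> i))"
  proof (intro sum.cong prod.cong refl)
    fix \<alpha> i assume "\<alpha> \<in> alphas d s" "i \<in> {1..d}"
    then have "T_index d s \<alpha> i < n i" by (rule Tidx_lt)
    then show "(\<Sum>x<n i. g i $$ (j i, x) * (if x = T_index d s \<alpha> i then 1 else 0)) = ent g i (j i) (T_index d s \<alpha> i)"
      unfolding ent_def by (simp add: if_distrib cong: if_cong)
  qed
  also have "\<dots> = LL s (ent g) j d 0" by (rule chain)
  finally show ?thesis .
qed

end


lemma inv_props:
  assumes A: "A \<in> carrier_mat m m" and inv: "invertible_mat A"
  shows "minv A \<in> carrier_mat m m \<and> A * minv A = 1\<^sub>m m \<and> minv A * A = 1\<^sub>m m"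
proof -
  obtain B where AB: "inverts_mat A B" and BA: "inverts_mat B A"
    using inv unfolding invertible_mat_def by blast
  have "A * B = 1\<^sub>m m" using AB A unfolding inverts_mat_def by auto
  then have cB: "dim_col B = m" by (metis index_mult_mat(3) index_one_mat(3))
  have "B * A = 1\<^sub>m (dim_row B)" using BA unfolding inverts_mat_def by auto
  then have rB: "dim_row B = m" using A by (metis index_mult_mat(3) index_one_mat(3) carrier_matD(2))
  have ex: "\<exists>B. B \<in> carrier_mat (dim_row A) (dim_row A) \<and> inverts_mat A B \<and> inverts_mat B A"
    using AB BA cB rB A by auto
  have "minv A \<in> carrier_mat (dim_row A) (dim_row A) \<and> inverts_mat A (minv A) \<and> inverts_mat (minv A) A"
    unfolding minv_def by (rule someI_ex[OF ex])
  then show ?thesis using A unfolding inverts_mat_def by auto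
qed

lemma inv_left_entry:
  assumes "A \<in> carrier_mat m m" "invertible_mat A" "p < m" "q < m"
  shows "(\<Sum>x<m. minv A $$ (p,x) * A $$ (x,q)) = (if p = q then 1 else 0)"
proof -
  have "(\<Sum>x<m. minv A $$ (p,x) * A $$ (x,q)) = (minv A * A) $$ (p,q)"
    using mult_entry[of "minv A" m A p q] inv_props[OF assms(1,2)] assms by simp
  then show ?thesis using inv_props[OF assms(1,2)] assms by simp
qed

lemma inv_right_entry:
  assumes "A \<in> carrier_mat m m" "invertible_mat A" "p < m" "q < m"
  shows "(\<Sum>x<m. A $$ (p,x) * minv A $$ (x,q)) = (if p = q then 1 else 0)"
proof -
  have "(\<Sum>x<m. A $$ (p,x) * minv A $$ (x,q)) = (A * minv A) $$ (p,q)"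
    using mult_entry[of A m "minv A" p q] inv_props[OF assms(1,2)] assms by simp
  then show ?thesis using inv_props[OF assms(1,2)] assms by simp
qed

lemma invertible_det: "A \<in> carrier_mat m m \<Longrightarrow> invertible_mat (A :: real mat) \<Longrightarrow> det A \<noteq> 0"
proof -
  assume A: "A \<in> carrier_mat m m" and inv: "invertible_mat A"
  have "det (A * minv A) = det A * det (minv A)" using inv_props[OF A inv] A by (intro det_mult) auto
  then have "det A * det (minv A) = 1" using inv_props[OF A inv] by simp
  then show ?thesis by auto
qed

lemma det_invertible: "A \<in> carrier_mat m m \<Longrightarrow> det (A :: real mat) \<noteq> 0 \<Longrightarrow> invertible_mat A"
proof -
  assume A: "A \<in> carrier_mat m m" and dA: "det A \<noteq> 0"
  have "A \<in> Units (ring_mat TYPE(real) m undefined)" by (rule det_non_zero_imp_unit[OF A dA])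
  then obtain B where B: "B \<in> carrier_mat m m" "B * A = 1\<^sub>m m" "A * B = 1\<^sub>m m"
    unfolding Units_def ring_mat_def by auto
  then show ?thesis using A unfolding invertible_mat_def inverts_mat_def square_mat.simps by auto
qed

lemma one_invertible: "invertible_mat (1\<^sub>m k :: real mat)"
  unfolding invertible_mat_def inverts_mat_def by (auto intro!: exI[of _ "1\<^sub>m k"])

lemma minv_one: "minv (1\<^sub>m 1 :: real mat) = 1\<^sub>m 1"
proof -
  have "minv (1\<^sub>m 1 :: real mat) \<in> carrier_mat 1 1" "1\<^sub>m 1 * minv (1\<^sub>m 1 :: real mat) = 1\<^sub>m 1"
    using inv_props[OF one_carrier_mat one_invertible, of 1] by auto
  then show ?thesis using left_mult_one_mat by metis
qed

lemma mv_entry: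
  assumes "M \<in> carrier_mat m m" "z \<in> carrier_vec m" "p < m"
  shows "(M *\<^sub>v z) $ p = (\<Sum>x<m. M $$ (p,x) * z $ x)"
  using assms by (auto simp: scalar_prod_def lessThan_atLeast0 intro!: sum.cong)

context mps
begin

definition rep :: "(nat \<Rightarrow> real mat) \<Rightarrow> nat \<Rightarrow> real mat \<Rightarrow> bool" where
  "rep g i A = (\<forall>k\<in>box d n. \<forall>b<s i. LL s (ent g) k i b = (\<Sum>b'<s i. LL s dlt k i b' * A $$ (b', b)))"

definition star :: "(nat \<Rightarrow> real mat) \<Rightarrow> nat \<Rightarrow> real mat \<Rightarrow> real mat \<Rightarrow> bool" where
  "star g i A' A = (\<forall>p<n i. \<forall>a'<s (i-1). \<forall>b<s i.
      (\<Sum>a<s (i-1). A' $$ (a',a) * g i $$ (p, a * s i + b)) = (if p div s i = a' then A $$ (p mod s i, b) else 0))"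

definition blk :: "(nat \<Rightarrow> real mat) \<Rightarrow> nat \<Rightarrow> real mat \<Rightarrow> real mat \<Rightarrow> bool" where
  "blk g i A' A = (\<forall>p<n i. \<forall>q<s (i-1) * s i. g i $$ (p,q) =
      (if p < s (i-1) * s i then minv A' $$ (q div s i, p div s i) * A $$ (p mod s i, q mod s i) else 0))"

lemma rep_step:
  assumes i: "i \<in> {1..d}" and st: "star g i A' A" and r: "rep g (i-1) A'"
  shows "rep g i A"
  unfolding rep_def
proof (intro ballI allI impI)
  fix k b assume k: "k \<in> box d n" and b: "b < s i"
  obtain i0 where i0: "i = Suc i0" using i by (cases i) auto
  have si: "0 < s i" using spos i by auto
  have ki: "k i < n i" using k i unfolding box_def by auto
  have "LL s (ent g) k i b = (\<Sum>a<s i0. LL s (ent g) k i0 a * g i $$ (k i, a * s i + b))"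
    unfolding i0 by (simp add: ent_def)
  also have "\<dots> = (\<Sum>a<s i0. (\<Sum>a'<s i0. LL s dlt k i0 a' * A' $$ (a', a)) * g i $$ (k i, a * s i + b))"
    using r k unfolding rep_def i0 by simp
  also have "\<dots> = (\<Sum>a<s i0. \<Sum>a'<s i0. LL s dlt k i0 a' * (A' $$ (a', a) * g i $$ (k i, a * s i + b)))"
    by (simp add: sum_distrib_right mult.assoc)
  also have "\<dots> = (\<Sum>a'<s i0. \<Sum>a<s i0. LL s dlt k i0 a' * (A' $$ (a', a) * g i $$ (k i, a * s i + b)))"
    by (rule sum.swap)
  also have "\<dots> = (\<Sum>a'<s i0. LL s dlt k i0 a' * (\<Sum>a<s i0. A' $$ (a', a) * g i $$ (k i, a * s i + b)))"
    by (simp add: sum_distrib_left)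
  also have "\<dots> = (\<Sum>a'<s i0. LL s dlt k i0 a' * (if k i div s i = a' then A $$ (k i mod s i, b) else 0))"
    using st ki b unfolding star_def i0 by (intro sum.cong refl) auto
  also have "\<dots> = (\<Sum>a'<s i0. LL s dlt k i0 a' * (\<Sum>b'<s i. (if k i = a' * s i + b' then 1 else 0) * A $$ (b', b)))"
    using delta_sum[OF si] by simp
  also have "\<dots> = (\<Sum>a'<s i0. \<Sum>b'<s i. LL s dlt k i0 a' * (if k i = a' * s i + b' then 1 else 0) * A $$ (b', b))"
    by (simp add: sum_distrib_left mult.assoc)
  also have "\<dots> = (\<Sum>b'<s i. \<Sum>a'<s i0. LL s dlt k i0 a' * (if k i = a' * s i + b' then 1 else 0) * A $$ (b', b))"
    by (rule sum.swap)
  also have "\<dots> = (\<Sum>b'<s i. LL s dlt k i b' * A $$ (b', b))"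
    unfolding i0 by (simp add: sum_distrib_right dlt_def)
  finally show "LL s (ent g) k i b = (\<Sum>b'<s i. LL s dlt k i b' * A $$ (b', b))" .
qed

lemma star_of_rep:
  assumes i: "i \<in> {1..d}" and r0: "rep g (i-1) A'" and r1: "rep g i A"
  shows "star g i A' A"
  unfolding star_def
proof (intro allI impI)
  fix p a' b assume p: "p < n i" and a': "a' < s (i-1)" and b: "b < s i"
  obtain i0 where i0: "i = Suc i0" using i by (cases i) auto
  have si: "0 < s i" using spos i by auto
  define \<alpha> where "\<alpha> = (\<lambda>l. if l = i0 then a' else (0::nat))"
  have a0: "\<alpha> 0 = 0" using a' s0 i0 unfolding \<alpha>_def by auto
  have alt: "\<forall>l\<le>i0. \<alpha> l < s l" using a' i0 spos i unfolding \<alpha>_def by auto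
  define k where "k = (\<lambda>l. if l \<in> {1..i0} then \<alpha> (l-1) * s l + \<alpha> l else if l = i then p else 0)"
  have kb: "k \<in> box d n" unfolding box_def
  proof (intro CollectI conjI ballI allI impI)
    fix l assume l: "l \<in> {1..d}"
    show "k l < n l"
    proof (cases "l \<in> {1..i0}")
      case True
      then have "\<alpha> (l-1) < s (l-1)" "\<alpha> l < s l" using alt by auto
      then show ?thesis using idx_lt_n l True unfolding k_def by auto
    next
      case False
      have "0 < s (l-1)" "0 < s l" using spos l by auto
      then have "0 < n l" using idx_lt_n[of 0 l 0, OF _ _ l] by simp
      then show ?thesis using p False unfolding k_def by auto
    qed
  next
    fix l assume "l \<notin> {1..d}"
    then show "k l = 0" using i i0 unfolding k_def by auto
  qed
  have kl: "\<forall>l\<in>{1..i0}. k l = \<alpha> (l-1) * s l + \<alpha> l" unfolding k_def by auto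
  have ki: "k i = p" unfolding k_def i0 by auto
  have ev0: "\<And>a''. a'' < s i0 \<Longrightarrow> LL s dlt k i0 a'' = (if a'' = a' then 1 else 0)"
    using LL_dlt_eval[OF kl alt a0] unfolding \<alpha>_def by auto
  have ev1: "\<And>b'. LL s dlt k i b' = (if p = a' * s i + b' then 1 else 0)"
    using LL_dlt_last[OF kl alt a0] ki unfolding i0 \<alpha>_def by simp
  have "LL s (ent g) k i b = (\<Sum>b'<s i. LL s dlt k i b' * A $$ (b', b))"
    using r1 kb b unfolding rep_def by auto
  also have "\<dots> = (if p div s i = a' then A $$ (p mod s i, b) else 0)"
    unfolding ev1 by (rule delta_sum[OF si])
  finally have e1: "LL s (ent g) k i b = (if p div s i = a' then A $$ (p mod s i, b) else 0)" .
  have "LL s (ent g) k i b = (\<Sum>a<s i0. LL s (ent g) k i0 a * g i $$ (p, a * s i + b))"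
    unfolding i0 using ki i0 by (simp add: ent_def)
  also have "\<dots> = (\<Sum>a<s i0. (\<Sum>a''<s i0. LL s dlt k i0 a'' * A' $$ (a'', a)) * g i $$ (p, a * s i + b))"
    using r0 kb unfolding rep_def i0 by simp
  also have "\<dots> = (\<Sum>a<s i0. A' $$ (a', a) * g i $$ (p, a * s i + b))"
  proof (intro sum.cong refl)
    fix a assume "a \<in> {..<s i0}"
    have "(\<Sum>a''<s i0. LL s dlt k i0 a'' * A' $$ (a'', a)) = (\<Sum>a''<s i0. (if a'' = a' then 1 else 0) * A' $$ (a'', a))"
      using ev0 by (intro sum.cong refl) auto
    also have "\<dots> = A' $$ (a', a)" using a' i0 by (intro sum_delta_left) simp
    finally show "(\<Sum>a''<s i0. LL s dlt k i0 a'' * A' $$ (a'', a)) * g i $$ (p, a * s i + b) = A' $$ (a', a) * g i $$ (p, a * s i + b)"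
      by simp
  qed
  finally show "(\<Sum>a<s (i-1). A' $$ (a',a) * g i $$ (p, a * s i + b)) = (if p div s i = a' then A $$ (p mod s i, b) else 0)"
    using e1 i0 by simp
qed

end


lemma sum_if_eq: "(\<Sum>a'<(S::nat). c a' * (if x = a' then X else 0)) = (if x < S then c x * (X::real) else 0)"
proof -
  have "(\<Sum>a'<S. c a' * (if x = a' then X else 0)) = (\<Sum>a'<S. if x = a' then c x * X else 0)"
    by (intro sum.cong refl) auto
  then show ?thesis by simp
qed

context mps
begin

lemma inv_step:
  assumes i: "i \<in> {1..d}" and A'c: "A' \<in> carrier_mat (s (i-1)) (s (i-1))" and A'i: "invertible_mat A'"
    and Ac: "A \<in> carrier_mat (s i) (s i)" and gc: "g i \<in> carrier_mat (n i) (n i)" and gi: "invertible_mat (g i)"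
    and st: "star g i A' A"
  shows "invertible_mat A"
proof (rule det_invertible[OF Ac], rule notI)
  assume "det A = 0"
  then obtain v where v: "v \<in> carrier_vec (s i)" "v \<noteq> 0\<^sub>v (s i)" "A *\<^sub>v v = 0\<^sub>v (s i)"
    using det_0_iff_vec_prod_zero[OF Ac] by auto
  have "\<exists>b0 < s i. v $ b0 \<noteq> 0"
  proof (rule ccontr)
    assume "\<not> ?thesis"
    then have "v = 0\<^sub>v (s i)" using v(1) by (intro eq_vecI) auto
    then show False using v(2) by simp
  qed
  then obtain b0 where b0: "b0 < s i" "v $ b0 \<noteq> 0" by blast
  define m where "m = s (i-1) * s i"
  have mn: "m \<le> n i" using sn i unfolding m_def by auto
  have si: "0 < s i" using spos i by auto
  have si1: "0 < s (i-1)" using spos i by auto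
  have Av: "\<And>r. r < s i \<Longrightarrow> (\<Sum>b<s i. A $$ (r,b) * v $ b) = 0"
  proof -
    fix r assume r: "r < s i"
    have "(A *\<^sub>v v) $ r = (\<Sum>b<s i. A $$ (r,b) * v $ b)" by (rule mv_entry[OF Ac v(1) r])
    then show "(\<Sum>b<s i. A $$ (r,b) * v $ b) = 0" using v(3) r by simp
  qed
  have zero: "\<And>a' a. a' < s (i-1) \<Longrightarrow> a < s (i-1) \<Longrightarrow> A' $$ (a',a) = 0"
  proof -
    fix a' a assume a': "a' < s (i-1)" and a: "a < s (i-1)"
    define z where "z = vec (n i) (\<lambda>q. if q < m then A' $$ (a', q div s i) * v $ (q mod s i) else 0)"
    have zc: "z \<in> carrier_vec (n i)" unfolding z_def by simp
    have gz: "g i *\<^sub>v z = 0\<^sub>v (n i)"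
    proof (rule eq_vecI)
      show "dim_vec (g i *\<^sub>v z) = dim_vec (0\<^sub>v (n i))" using gc by simp
    next
      fix p assume "p < dim_vec (0\<^sub>v (n i))"
      then have p: "p < n i" by simp
      have "(g i *\<^sub>v z) $ p = (\<Sum>q<n i. g i $$ (p,q) * z $ q)" by (rule mv_entry[OF gc zc p])
      also have "\<dots> = (\<Sum>q<m. g i $$ (p,q) * z $ q)"
        using mn unfolding z_def by (intro sum.mono_neutral_right) auto
      also have "\<dots> = (\<Sum>q<m. g i $$ (p,q) * (A' $$ (a', q div s i) * v $ (q mod s i)))"
        using mn unfolding z_def by (intro sum.cong refl) auto
      also have "\<dots> = (\<Sum>a<s (i-1). \<Sum>b<s i. g i $$ (p, a * s i + b) * (A' $$ (a', a) * v $ b))"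
        unfolding m_def sum_split_idx by (intro sum.cong refl) auto
      also have "\<dots> = (\<Sum>b<s i. \<Sum>a<s (i-1). v $ b * (A' $$ (a', a) * g i $$ (p, a * s i + b)))"
        by (subst sum.swap) (simp add: mult_ac)
      also have "\<dots> = (\<Sum>b<s i. v $ b * (\<Sum>a<s (i-1). A' $$ (a', a) * g i $$ (p, a * s i + b)))"
        by (simp add: sum_distrib_left)
      also have "\<dots> = (\<Sum>b<s i. v $ b * (if p div s i = a' then A $$ (p mod s i, b) else 0))"
        using st p a' unfolding star_def by (intro sum.cong refl) auto
      also have "\<dots> = (if p div s i = a' then (\<Sum>b<s i. A $$ (p mod s i, b) * v $ b) else 0)"
        by (auto simp: mult.commute)
      also have "\<dots> = 0" using Av si by simp
      finally show "(g i *\<^sub>v z) $ p = 0\<^sub>v (n i) $ p" using p by simp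
    qed
    have gic: "minv (g i) \<in> carrier_mat (n i) (n i)" "minv (g i) * g i = 1\<^sub>m (n i)"
      using inv_props[OF gc gi] by auto
    have "z = (minv (g i) * g i) *\<^sub>v z" using gic zc by simp
    also have "\<dots> = minv (g i) *\<^sub>v (g i *\<^sub>v z)" by (rule assoc_mult_mat_vec[OF gic(1) gc zc])
    also have "\<dots> = 0\<^sub>v (n i)" unfolding gz using gic(1) by (intro eq_vecI) (auto simp: scalar_prod_def)
    finally have z0: "z = 0\<^sub>v (n i)" .
    have q: "a * s i + b0 < m" unfolding m_def by (rule idx_bound[OF a b0(1)])
    then have "z $ (a * s i + b0) = A' $$ (a', a) * v $ b0" using mn b0 unfolding z_def by simp
    then have "A' $$ (a', a) * v $ b0 = 0" using z0 q mn by simp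
    then show "A' $$ (a', a) = 0" using b0 by simp
  qed
  have "(\<Sum>x<s (i-1). A' $$ (0,x) * minv A' $$ (x,0)) = 1"
    using inv_right_entry[OF A'c A'i si1 si1] by simp
  moreover have "(\<Sum>x<s (i-1). A' $$ (0,x) * minv A' $$ (x,0)) = 0"
    using zero si1 by simp
  ultimately show False by simp
qed

lemma block_of_star:
  assumes i: "i \<in> {1..d}" and A'c: "A' \<in> carrier_mat (s (i-1)) (s (i-1))" and A'i: "invertible_mat A'"
    and st: "star g i A' A"
  shows "blk g i A' A"
  unfolding blk_def
proof (intro allI impI)
  fix p q assume p: "p < n i" and q: "q < s (i-1) * s i"
  have si: "0 < s i" using spos i by auto
  define a0 where "a0 = q div s i"
  define b where "b = q mod s i"
  have qe: "q = a0 * s i + b" unfolding a0_def b_def by simp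
  have a0: "a0 < s (i-1)" unfolding a0_def using q by (simp add: less_mult_imp_div_less)
  have b: "b < s i" unfolding b_def using si by simp
  have "g i $$ (p,q) = (\<Sum>a<s (i-1). (if a = a0 then 1 else 0) * g i $$ (p, a * s i + b))"
    using sum_delta_left[OF a0, of "\<lambda>a. g i $$ (p, a * s i + b)"] qe by simp
  also have "\<dots> = (\<Sum>a<s (i-1). (\<Sum>a'<s (i-1). minv A' $$ (a0,a') * A' $$ (a',a)) * g i $$ (p, a * s i + b))"
    using inv_left_entry[OF A'c A'i a0] by (intro sum.cong refl) auto
  also have "\<dots> = (\<Sum>a<s (i-1). \<Sum>a'<s (i-1). minv A' $$ (a0,a') * (A' $$ (a',a) * g i $$ (p, a * s i + b)))"
    by (simp add: sum_distrib_right mult.assoc)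
  also have "\<dots> = (\<Sum>a'<s (i-1). \<Sum>a<s (i-1). minv A' $$ (a0,a') * (A' $$ (a',a) * g i $$ (p, a * s i + b)))"
    by (rule sum.swap)
  also have "\<dots> = (\<Sum>a'<s (i-1). minv A' $$ (a0,a') * (\<Sum>a<s (i-1). A' $$ (a',a) * g i $$ (p, a * s i + b)))"
    by (simp add: sum_distrib_left)
  also have "\<dots> = (\<Sum>a'<s (i-1). minv A' $$ (a0,a') * (if p div s i = a' then A $$ (p mod s i, b) else 0))"
    using st p b unfolding star_def by (intro sum.cong refl) auto
  also have "\<dots> = (if p div s i < s (i-1) then minv A' $$ (a0, p div s i) * A $$ (p mod s i, b) else 0)"
    by (rule sum_if_eq)
  also have "(p div s i < s (i-1)) = (p < s (i-1) * s i)"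
  proof
    assume "p div s i < s (i-1)"
    then have "p div s i * s i + p mod s i < s (i-1) * s i" using si by (intro idx_bound) auto
    then show "p < s (i-1) * s i" by simp
  qed (simp add: less_mult_imp_div_less)
  finally show "g i $$ (p,q) = (if p < s (i-1) * s i then minv A' $$ (q div s i, p div s i) * A $$ (p mod s i, q mod s i) else 0)"
    unfolding a0_def b_def .
qed

lemma star_of_block:
  assumes i: "i \<in> {1..d}" and A'c: "A' \<in> carrier_mat (s (i-1)) (s (i-1))" and A'i: "invertible_mat A'"
    and bl: "blk g i A' A"
  shows "star g i A' A"
  unfolding star_def
proof (intro allI impI)
  fix p a' b assume p: "p < n i" and a': "a' < s (i-1)" and b: "b < s i"
  have si: "0 < s i" using spos i by auto
  have ge: "\<And>a. a < s (i-1) \<Longrightarrow> g i $$ (p, a * s i + b) =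
      (if p < s (i-1) * s i then minv A' $$ (a, p div s i) * A $$ (p mod s i, b) else 0)"
  proof -
    fix a assume a: "a < s (i-1)"
    have "a * s i + b < s (i-1) * s i" by (rule idx_bound[OF a b])
    then show "?thesis a" using bl p b unfolding blk_def by auto
  qed
  show "(\<Sum>a<s (i-1). A' $$ (a',a) * g i $$ (p, a * s i + b)) = (if p div s i = a' then A $$ (p mod s i, b) else 0)"
  proof (cases "p < s (i-1) * s i")
    case True
    have pd: "p div s i < s (i-1)" using True by (simp add: less_mult_imp_div_less)
    have "(\<Sum>a<s (i-1). A' $$ (a',a) * g i $$ (p, a * s i + b))
        = (\<Sum>a<s (i-1). A' $$ (a',a) * minv A' $$ (a, p div s i)) * A $$ (p mod s i, b)"
      using True ge by (simp add: sum_distrib_right mult.assoc)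
    also have "\<dots> = (if a' = p div s i then 1 else 0) * A $$ (p mod s i, b)"
      using inv_right_entry[OF A'c A'i a' pd] by simp
    finally show ?thesis by auto
  next
    case False
    then have "\<not> p div s i < s (i-1)"
      using idx_bound[of "p div s i" "s (i-1)" "p mod s i" "s i"] si by auto
    then have "p div s i \<noteq> a'" using a' by auto
    then show ?thesis using False ge by simp
  qed
qed

lemma diag_entry:
  assumes Ac: "\<forall>i\<in>{1..d-1}. A i \<in> carrier_mat (s i) (s i) \<and> invertible_mat (A i)"
    and A'_def: "A' = (\<lambda>i. if i \<in> {1..d-1} then A i else 1\<^sub>m 1)"
    and i: "i \<in> {1..d}"
  shows "diag_block d A i \<in> carrier_mat (s (i-1) * s i) (s (i-1) * s i) \<and>
    (\<forall>p<s (i-1) * s i. \<forall>q<s (i-1) * s i. diag_block d A i $$ (p,q) =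
        minv (A' (i-1)) $$ (q div s i, p div s i) * A' i $$ (p mod s i, q mod s i))"
proof -
  have m1: "minv (A j) \<in> carrier_mat (s j) (s j)" if "j \<in> {1..d-1}" for j
    using inv_props[of "A j" "s j"] Ac that by auto
  consider "i = 1" | "i = d" | "1 < i \<and> i < d" using i by fastforce
  then show ?thesis
  proof cases
    case 1
    have c: "A 1 \<in> carrier_mat (s 1) (s 1)" using Ac d3 by auto
    have A'01: "A' 0 = 1\<^sub>m 1" "A' (Suc 0) = A (Suc 0)" using A'_def d3 by auto
    have mo: "minv (1\<^sub>m (Suc 0)) = (1\<^sub>m (Suc 0) :: real mat)" using minv_one by simp
    show ?thesis using 1 c s0 A'01 mo unfolding diag_block_def by auto
  next
    case 2
    have dd: "d - 1 \<in> {1..d-1}" using d3 by auto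
    have c: "minv (A (d-1)) \<in> carrier_mat (s (d-1)) (s (d-1))" using m1[OF dd] .
    have A'dd: "A' (d-1) = A (d-1)" "A' d = 1\<^sub>m 1" using A'_def d3 by auto
    have nd1: "d \<noteq> 1" using d3 by auto
    show ?thesis using 2 c sd nd1 A'dd unfolding diag_block_def minvT_def by auto
  next
    case 3
    have j1: "i - 1 \<in> {1..d-1}" "i \<in> {1..d-1}" using 3 by auto
    have c1: "minv (A (i-1)) \<in> carrier_mat (s (i-1)) (s (i-1))" using m1[OF j1(1)] .
    have c2: "A i \<in> carrier_mat (s i) (s i)" using Ac j1 by auto
    have A'ii: "A' (i-1) = A (i-1)" "A' i = A i" using A'_def j1 by auto
    have si: "0 < s i" using spos i by auto
    have ne: "i \<noteq> 1" "i \<noteq> d" using 3 by auto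
    have "\<forall>p<s (i-1) * s i. \<forall>q<s (i-1) * s i. diag_block d A i $$ (p,q) =
        minv (A (i-1)) $$ (q div s i, p div s i) * A i $$ (p mod s i, q mod s i)"
    proof (intro allI impI)
      fix p q assume p: "p < s (i-1) * s i" and q: "q < s (i-1) * s i"
      have "p div s i < s (i-1)" "q div s i < s (i-1)" using p q by (auto simp: less_mult_imp_div_less)
      then show "diag_block d A i $$ (p,q) = minv (A (i-1)) $$ (q div s i, p div s i) * A i $$ (p mod s i, q mod s i)"
        using p q c1 c2 ne unfolding diag_block_def kron_def minvT_def by simp
    qed
    moreover have "diag_block d A i \<in> carrier_mat (s (i-1) * s i) (s (i-1) * s i)"
      using c1 c2 ne unfolding diag_block_def kron_def minvT_def by simp
    ultimately show ?thesis unfolding A'ii by simp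
  qed
qed

end


context mps
begin

lemma rep0: "rep g 0 (1\<^sub>m 1)"
  unfolding rep_def using s0 by simp

lemma rep_exists:
  assumes gG: "in_G d n g" and H: "\<forall>j\<in>multi_idx d n. act d n g (T_tensor d s) j = T_tensor d s j"
    and i: "i \<in> {1..d-1}"
  shows "\<exists>A. A \<in> carrier_mat (s i) (s i) \<and> rep g i A"
proof -
  define h where "h = (\<lambda>l. minv (g l))"
  define gl where "gl = (\<lambda>l. if l \<le> i then g l else 1\<^sub>m (n l))"
  define hr where "hr = (\<lambda>l. if l \<le> i then 1\<^sub>m (n l) else h l)"
  have gc: "\<forall>l\<in>{1..d}. g l \<in> carrier_mat (n l) (n l) \<and> invertible_mat (g l)"
    using gG unfolding in_G_def by auto
  have hc: "\<forall>l\<in>{1..d}. h l \<in> carrier_mat (n l) (n l) \<and> h l * g l = 1\<^sub>m (n l)"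
    using gc inv_props unfolding h_def by blast
  have hrc: "\<forall>l\<in>{1..d}. g l \<in> carrier_mat (n l) (n l) \<and> hr l \<in> carrier_mat (n l) (n l)"
    using gc hc unfolding hr_def by auto
  have il: "i \<le> d" "i < d" "d - (d - i) = i" using i d3 by auto
  have eq: "act d n gl (T_tensor d s) k = act d n hr (T_tensor d s) k" if k: "k \<in> multi_idx d n" for k
  proof -
    have "act d n hr (T_tensor d s) k = act d n hr (act d n g (T_tensor d s)) k"
      using H by (intro act_cong2) auto
    also have "\<dots> = act d n (\<lambda>l. hr l * g l) (T_tensor d s) k" by (rule act_comp[OF hrc k])
    also have "\<dots> = act d n gl (T_tensor d s) k"
    proof (rule arg_cong[where f = "\<lambda>x. x k"], rule act_cong, rule ballI)
      fix l assume l: "l \<in> {1..d}"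
      show "hr l * g l = gl l"
      proof (cases "l \<le> i")
        case True
        have "g l \<in> carrier_mat (n l) (n l)" using gc l by auto
        then show ?thesis using True unfolding hr_def gl_def by (simp add: left_mult_one_mat)
      next
        case False then show ?thesis using hc l unfolding hr_def gl_def by simp
      qed
    qed
    finally show ?thesis by simp
  qed
  have onent: "1\<^sub>m (n l) $$ (k l, q) = dlt l (k l) q"
    if "k \<in> box d n" "l \<in> {1..d}" "q < s (l-1) * s l" for k l q
  proof -
    have "k l < n l" using that unfolding box_def by auto
    moreover have "q < n l" using that sn by (meson order_less_le_trans)
    ultimately show ?thesis unfolding dlt_def by simp
  qed
  have L1: "act d n gl (T_tensor d s) k = (\<Sum>b<s i. LL s (ent g) k i b * RR d s dlt k (d-i) b)"
    if k: "k \<in> box d n" for k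
  proof -
    have "act d n gl (T_tensor d s) k = (\<Sum>b<s i. LL s (ent gl) k i b * RR d s (ent gl) k (d-i) b)"
      unfolding act_LL using LL_RR_split[where s=s and d=d, OF sd il(1)] by simp
    also have "\<dots> = (\<Sum>b<s i. LL s (ent g) k i b * RR d s dlt k (d-i) b)"
    proof (intro sum.cong refl arg_cong2[where f = "(*)"])
      fix b assume b: "b \<in> {..<s i}"
      show "LL s (ent gl) k i b = LL s (ent g) k i b"
        using b by (intro LL_cong) (auto simp: ent_def gl_def)
      show "RR d s (ent gl) k (d-i) b = RR d s dlt k (d-i) b"
      proof (rule RR_cong)
        show "\<forall>l. d - (d - i) < l \<and> l \<le> d \<longrightarrow> (\<forall>q<s (l-1) * s l. ent gl l (k l) q = dlt l (k l) q)"
          using onent[OF k] il unfolding ent_def gl_def by auto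
      qed (use b il in auto)
    qed
    finally show ?thesis .
  qed
  have L2: "act d n hr (T_tensor d s) k = (\<Sum>b<s i. LL s dlt k i b * RR d s (ent h) k (d-i) b)"
    if k: "k \<in> box d n" for k
  proof -
    have "act d n hr (T_tensor d s) k = (\<Sum>b<s i. LL s (ent hr) k i b * RR d s (ent hr) k (d-i) b)"
      unfolding act_LL using LL_RR_split[where s=s and d=d, OF sd il(1)] by simp
    also have "\<dots> = (\<Sum>b<s i. LL s dlt k i b * RR d s (ent h) k (d-i) b)"
    proof (intro sum.cong refl arg_cong2[where f = "(*)"])
      fix b assume b: "b \<in> {..<s i}"
      show "LL s (ent hr) k i b = LL s dlt k i b"
      proof (rule LL_cong)
        show "\<forall>l\<in>{1..i}. \<forall>q<s (l-1) * s l. ent hr l (k l) q = dlt l (k l) q"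
          using onent[OF k] il unfolding ent_def hr_def by auto
      qed (use b in auto)
      show "RR d s (ent hr) k (d-i) b = RR d s (ent h) k (d-i) b"
        using b il by (intro RR_cong) (auto simp: ent_def hr_def)
    qed
    finally show ?thesis .
  qed
  define \<beta> where "\<beta> = (\<lambda>b0 l. if l = i then b0 else (0::nat))"
  define ks where "ks = (\<lambda>b0 l. if l \<in> {i+1..d} then \<beta> b0 (l-1) * s l + \<beta> b0 l else 0)"
  define A where "A = mat (s i) (s i) (\<lambda>(b, b0). RR d s (ent h) (ks b0) (d-i) b)"
  show ?thesis
  proof (intro exI conjI)
    show "A \<in> carrier_mat (s i) (s i)" by (simp add: A_def)
    show "rep g i A" unfolding rep_def
    proof (intro ballI allI impI)
      fix k0 b0 assume k0: "k0 \<in> box d n" and b0: "b0 < s i"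
      define k where "k = (\<lambda>l. if l \<le> i then k0 l else ks b0 l)"
      have blt: "\<beta> b0 l < s l" if "l \<le> d" for l
        using b0 spos[OF that] unfolding \<beta>_def by auto
      have kb: "k \<in> box d n" unfolding box_def
      proof (intro CollectI conjI ballI allI impI)
        fix l assume l: "l \<in> {1..d}"
        show "k l < n l"
        proof (cases "l \<le> i")
          case True then show ?thesis using k0 l unfolding k_def box_def by auto
        next
          case False
          have "\<beta> b0 (l-1) * s l + \<beta> b0 l < n l"
            using idx_lt_n[OF blt blt l] l by auto
          then show ?thesis using False l unfolding k_def ks_def by auto
        qed
      next
        fix l assume l: "l \<notin> {1..d}"
        show "k l = 0"
        proof (cases "l \<le> i")
          case True then have "l = 0" using l il by auto
          then show ?thesis using k0 unfolding k_def box_def by auto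
        next
          case False then show ?thesis using l unfolding k_def ks_def by auto
        qed
      qed
      have RRk: "RR d s dlt k (d-i) b = (if b = b0 then 1 else 0)" if b: "b < s i" for b
      proof -
        have "RR d s dlt k (d-i) b = (if b = \<beta> b0 (d - (d-i)) then 1 else 0)"
        proof (rule RR_dlt_eval[where s=s and d=d, OF sd])
          show "\<forall>l. d - (d - i) < l \<and> l \<le> d \<longrightarrow> k l = \<beta> b0 (l-1) * s l + \<beta> b0 l"
            using il unfolding k_def ks_def by auto
          show "\<forall>l. d - (d - i) \<le> l \<and> l \<le> d \<longrightarrow> \<beta> b0 l < s l" using blt by auto
        qed (use b il in auto)
        then show ?thesis using il unfolding \<beta>_def by simp
      qed
      have kk: "k \<in> multi_idx d n" using kb multi_idx_box by simp
      have "LL s (ent g) k0 i b0 = LL s (ent g) k i b0"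
        using b0 by (intro LL_cong) (auto simp: k_def)
      also have "\<dots> = (\<Sum>b<s i. (if b = b0 then 1 else 0) * LL s (ent g) k i b)"
        using sum_delta_left[OF b0] by simp
      also have "\<dots> = (\<Sum>b<s i. LL s (ent g) k i b * RR d s dlt k (d-i) b)"
        using RRk by (intro sum.cong refl) auto
      also have "\<dots> = act d n gl (T_tensor d s) k" using L1[OF kb] by simp
      also have "\<dots> = act d n hr (T_tensor d s) k" using eq[OF kk] .
      also have "\<dots> = (\<Sum>b<s i. LL s dlt k i b * RR d s (ent h) k (d-i) b)" using L2[OF kb] .
      also have "\<dots> = (\<Sum>b<s i. LL s dlt k0 i b * A $$ (b, b0))"
      proof (intro sum.cong refl arg_cong2[where f = "(*)"])
        fix b assume b: "b \<in> {..<s i}"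
        show "LL s dlt k i b = LL s dlt k0 i b" using b by (intro LL_cong) (auto simp: k_def)
        have "RR d s (ent h) k (d-i) b = RR d s (ent h) (ks b0) (d-i) b"
          using b il by (intro RR_cong) (auto simp: k_def)
        then show "RR d s (ent h) k (d-i) b = A $$ (b, b0)" using b b0 unfolding A_def by simp
      qed
      finally show "LL s (ent g) k0 i b0 = (\<Sum>b'<s i. LL s dlt k0 i b' * A $$ (b', b0))" .
    qed
  qed
qed

end


context mps
begin

lemma repd_iff: "rep g d (1\<^sub>m 1) \<longleftrightarrow> (\<forall>k\<in>box d n. LL s (ent g) k d 0 = LL s dlt k d 0)"
  unfolding rep_def using sd by simp

lemma A'_facts:
  fixes A A' :: "nat \<Rightarrow> real mat"
  assumes Ac: "\<forall>i\<in>{1..d-1}. A i \<in> carrier_mat (s i) (s i) \<and> invertible_mat (A i)"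
    and A'_def: "A' = (\<lambda>i. if i \<in> {1..d-1} then A i else 1\<^sub>m 1)"
  shows "\<And>i. i \<le> d \<Longrightarrow> A' i \<in> carrier_mat (s i) (s i)"
    and "\<And>i. i \<le> d - 1 \<Longrightarrow> invertible_mat (A' i)"
proof -
  fix i assume i: "i \<le> d"
  show "A' i \<in> carrier_mat (s i) (s i)"
  proof (cases "i \<in> {1..d-1}")
    case True then show ?thesis using Ac A'_def by auto
  next
    case False then have "i = 0 \<or> i = d" using i by auto
    then show ?thesis using False A'_def s0 sd by auto
  qed
next
  fix i assume i: "i \<le> d - 1"
  show "invertible_mat (A' i)"
    using Ac A'_def one_invertible by auto
qed

lemma fwd:
  assumes gG: "in_G d n g" and H: "\<forall>j\<in>multi_idx d n. act d n g (T_tensor d s) j = T_tensor d s j"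
  shows "stab_form d n s g"
proof -
  have "\<forall>i\<in>{1..d-1}. \<exists>A. A \<in> carrier_mat (s i) (s i) \<and> rep g i A"
    using rep_exists[OF gG H] by blast
  then obtain Af where Af: "\<forall>i\<in>{1..d-1}. Af i \<in> carrier_mat (s i) (s i) \<and> rep g i (Af i)"
    by metis
  define A' where "A' = (\<lambda>i. if i \<in> {1..d-1} then Af i else 1\<^sub>m 1)"
  have gc: "\<forall>l\<in>{1..d}. g l \<in> carrier_mat (n l) (n l) \<and> invertible_mat (g l)"
    using gG unfolding in_G_def by auto
  have A'c: "A' i \<in> carrier_mat (s i) (s i)" if "i \<le> d" for i
  proof (cases "i \<in> {1..d-1}")
    case True then show ?thesis using Af A'_def by auto
  next
    case False then have "i = 0 \<or> i = d" using that by auto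
    then show ?thesis using False A'_def s0 sd by auto
  qed
  have rep_all: "rep g i (A' i)" if ild: "i \<le> d" for i
  proof -
    consider "i = 0" | "i = d" | "i \<in> {1..d-1}" using ild by fastforce
    then show ?thesis
    proof cases
      case 1 then show ?thesis using rep0 A'_def by simp
    next
      case 2
      have "A' d = 1\<^sub>m 1" using A'_def d3 by auto
      moreover have "\<forall>k\<in>box d n. LL s (ent g) k d 0 = LL s dlt k d 0"
      proof
        fix k assume k: "k \<in> box d n"
        have "LL s (ent g) k d 0 = act d n g (T_tensor d s) k" by (simp add: act_LL)
        also have "\<dots> = T_tensor d s k" using H k multi_idx_box by simp
        also have "\<dots> = LL s dlt k d 0" by (rule T_LL)
        finally show "LL s (ent g) k d 0 = LL s dlt k d 0" .
      qed
      ultimately show ?thesis using 2 repd_iff by simp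
    next
      case 3 then show ?thesis using Af A'_def by simp
    qed
  qed
  have star_all: "star g i (A' (i-1)) (A' i)" if "i \<in> {1..d}" for i
    using star_of_rep[OF that] rep_all that by auto
  have inv_all: "invertible_mat (A' i)" if "i \<le> d - 1" for i
    using that
  proof (induction i)
    case 0 then show ?case using A'_def one_invertible by simp
  next
    case (Suc i)
    have si: "Suc i \<in> {1..d}" using Suc.prems by auto
    show ?case
      using inv_step[OF si _ _ _ _ _ star_all[OF si]] A'c Suc gc si by auto
  qed
  have blk_all: "blk g i (A' (i-1)) (A' i)" if "i \<in> {1..d}" for i
    using block_of_star[OF that _ _ star_all[OF that]] A'c inv_all that by auto
  have A'in: "\<forall>i\<in>{1..d-1}. A' i \<in> carrier_mat (s i) (s i) \<and> invertible_mat (A' i)"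
    using A'c inv_all by auto
  have A'A': "A' = (\<lambda>i. if i \<in> {1..d-1} then A' i else 1\<^sub>m 1)"
    unfolding A'_def by auto
  define m where "m = (\<lambda>i. s (i-1) * s i)"
  define B where "B = (\<lambda>i. mat (n i - m i) (n i - m i) (\<lambda>(p,q). g i $$ (p + m i, q + m i)))"
  define M where "M = (\<lambda>i. mat (m i) (n i - m i) (\<lambda>(p,q). g i $$ (p, q + m i)))"
  have gform: "g i = four_block_mat (diag_block d A' i) (M i) (0\<^sub>m (n i - m i) (m i)) (B i)"
    if i: "i \<in> {1..d}" for i
  proof -
    have dg: "diag_block d A' i \<in> carrier_mat (m i) (m i)"
      "\<forall>p<m i. \<forall>q<m i. diag_block d A' i $$ (p,q) = minv (A' (i-1)) $$ (q div s i, p div s i) * A' i $$ (p mod s i, q mod s i)"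
      using diag_entry[OF A'in A'A' i] unfolding m_def by auto
    have mn: "m i \<le> n i" using sn i unfolding m_def by auto
    have gi: "g i \<in> carrier_mat (n i) (n i)" using gc i by auto
    have bl: "\<forall>p<n i. \<forall>q<m i. g i $$ (p,q) = (if p < m i then minv (A' (i-1)) $$ (q div s i, p div s i) * A' i $$ (p mod s i, q mod s i) else 0)"
      using blk_all[OF i] unfolding blk_def m_def by auto
    show ?thesis
    proof (rule eq_matI)
      fix p q assume p: "p < dim_row (four_block_mat (diag_block d A' i) (M i) (0\<^sub>m (n i - m i) (m i)) (B i))"
        and q: "q < dim_col (four_block_mat (diag_block d A' i) (M i) (0\<^sub>m (n i - m i) (m i)) (B i))"
      have pn: "p < n i" "q < n i" using p q dg mn unfolding B_def by auto
      show "g i $$ (p,q) = four_block_mat (diag_block d A' i) (M i) (0\<^sub>m (n i - m i) (m i)) (B i) $$ (p,q)"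
        using p q pn dg bl mn unfolding B_def M_def by auto
    qed (use gi dg mn in \<open>auto simp: B_def\<close>)
  qed
  show ?thesis unfolding stab_form_def
  proof (intro exI conjI ballI)
    fix i assume i: "i \<in> {1..d-1}"
    show "A' i \<in> carrier_mat (s i) (s i)" "invertible_mat (A' i)" using A'in i by auto
  next
    fix i assume i: "i \<in> {1..d}"
    show "B i \<in> carrier_mat (n i - s (i-1) * s i) (n i - s (i-1) * s i)" unfolding B_def m_def by simp
    show "M i \<in> carrier_mat (s (i-1) * s i) (n i - s (i-1) * s i)" unfolding M_def m_def by simp
    show "g i = four_block_mat (diag_block d A' i) (M i) (0\<^sub>m (n i - s (i-1) * s i) (s (i-1) * s i)) (B i)"
      using gform[OF i] unfolding m_def by simp
    have dg: "diag_block d A' i \<in> carrier_mat (m i) (m i)"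
      using diag_entry[OF A'in A'A' i] unfolding m_def by auto
    have gi: "g i \<in> carrier_mat (n i) (n i)" "invertible_mat (g i)" using gc i by auto
    have "det (g i) = det (diag_block d A' i) * det (B i)"
      unfolding gform[OF i] by (rule det_four_block_mat_lower_left_zero[OF dg]) (auto simp: M_def B_def)
    moreover have "det (g i) \<noteq> 0" using invertible_det[OF gi] .
    ultimately have "det (B i) \<noteq> 0" by auto
    then show "invertible_mat (B i)"
      using det_invertible[of "B i" "n i - m i"] unfolding B_def by simp
  qed
qed

lemma bwd:
  assumes gG: "in_G d n g" and SF: "stab_form d n s g"
  shows "\<forall>j\<in>multi_idx d n. act d n g (T_tensor d s) j = T_tensor d s j"
proof -
  obtain A B M where A: "\<forall>i\<in>{1..d-1}. A i \<in> carrier_mat (s i) (s i) \<and> invertible_mat (A i)"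
    and B: "\<forall>i\<in>{1..d}. B i \<in> carrier_mat (n i - s (i-1) * s i) (n i - s (i-1) * s i) \<and> invertible_mat (B i)"
    and M: "\<forall>i\<in>{1..d}. M i \<in> carrier_mat (s (i-1) * s i) (n i - s (i-1) * s i)"
    and G: "\<forall>i\<in>{1..d}. g i = four_block_mat (diag_block d A i) (M i)
                            (0\<^sub>m (n i - s (i-1) * s i) (s (i-1) * s i)) (B i)"
    using SF unfolding stab_form_def by blast
  define A' where "A' = (\<lambda>i. if i \<in> {1..d-1} then A i else 1\<^sub>m 1)"
  note A'f = A'_facts[OF A A'_def]
  have blk_all: "blk g i (A' (i-1)) (A' i)" if i: "i \<in> {1..d}" for i
    unfolding blk_def
  proof (intro allI impI)
    fix p q assume p: "p < n i" and q: "q < s (i-1) * s i"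
    have dg: "diag_block d A i \<in> carrier_mat (s (i-1) * s i) (s (i-1) * s i)"
      "\<forall>p<s (i-1) * s i. \<forall>q<s (i-1) * s i. diag_block d A i $$ (p,q) = minv (A' (i-1)) $$ (q div s i, p div s i) * A' i $$ (p mod s i, q mod s i)"
      using diag_entry[OF A A'_def i] by auto
    have mn: "s (i-1) * s i \<le> n i" using sn i by auto
    have Bi: "B i \<in> carrier_mat (n i - s (i-1) * s i) (n i - s (i-1) * s i)" using B i by auto
    have "g i $$ (p,q) = four_block_mat (diag_block d A i) (M i) (0\<^sub>m (n i - s (i-1) * s i) (s (i-1) * s i)) (B i) $$ (p,q)"
      using G i by auto
    also have "\<dots> = (if p < s (i-1) * s i then minv (A' (i-1)) $$ (q div s i, p div s i) * A' i $$ (p mod s i, q mod s i) else 0)"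
      using p q dg Bi mn by auto
    finally show "g i $$ (p,q) = (if p < s (i-1) * s i then minv (A' (i-1)) $$ (q div s i, p div s i) * A' i $$ (p mod s i, q mod s i) else 0)" .
  qed
  have star_all: "star g i (A' (i-1)) (A' i)" if "i \<in> {1..d}" for i
    using star_of_block[OF that _ _ blk_all[OF that]] A'f that by auto
  have rep_all: "rep g i (A' i)" if "i \<le> d" for i
    using that
  proof (induction i)
    case 0 then show ?case using rep0 A'_def by simp
  next
    case (Suc i)
    have si: "Suc i \<in> {1..d}" using Suc.prems by auto
    show ?case using rep_step[OF si star_all[OF si]] Suc by simp
  qed
  have "A' d = 1\<^sub>m 1" using A'_def d3 by auto
  then have R: "\<forall>k\<in>box d n. LL s (ent g) k d 0 = LL s dlt k d 0"
    using rep_all[of d] repd_iff by simp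
  show ?thesis
  proof
    fix j assume j: "j \<in> multi_idx d n"
    show "act d n g (T_tensor d s) j = T_tensor d s j"
      using R j multi_idx_box by (simp add: act_LL T_LL)
  qed
qed

end

theorem mainTheorem12:
  fixes d :: nat and n s :: "nat \<Rightarrow> nat"
  assumes "d \<ge> 3"
    and "\<forall>i\<in>{1..d}. n i \<ge> 2"
    and "\<forall>i\<in>{1..d-1}. s i \<ge> 1"
    and "s 0 = 1" and "s d = 1"
    and "\<forall>i\<in>{1..d}. s (i-1) * s i \<le> n i"
  shows "\<forall>g. in_G d n g \<longrightarrow>
           ((\<forall>j\<in>multi_idx d n. act d n g (T_tensor d s) j = T_tensor d s j)
            \<longleftrightarrow> stab_form d n s g)"
proof -
  interpret mps d n s using assms by unfold_locales auto
  show ?thesis using fwd bwd by blast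
qed

end
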